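(* Let $\Omega\subset\mathbb{R}^d$, $N\in\mathbb{N}$, $D=Nd$, and let $\mathcal{C}:\Omega\to\mathcal{Z}$ be smooth, where $\mathcal{Z}$ is the set of block-diagonal symmetric positive definite $D\times D$ matrices with $N$ blocks of size $d\times d$. Let $f(\vec{x},\vec{q})=\exp(-\tfrac12\vec{q}^\top\mathcal{C}(\vec{x})^{-1}\vec{q})/\sqrt{(2\pi)^D\det\mathcal{C}(\vec{x})}$ for $\vec{q}\in\mathbb{R}^D$, and $$\rho(\vec{x},\vec{q})=\sum_{i=1}^d\vec{q}^\top\big(\mathcal{C}^{-1}\partial_{x_i}\mathcal{C}\big)^2\mathcal{C}^{-1}\vec{q}-\tfrac12\sum_{i=1}^d\operatorname{tr}\big((\mathcal{C}^{-1}\partial_{x_i}\mathcal{C})^2\big)-\tfrac14\sum_{i=1}^d\Big[\vec{q}^\top\mathcal{C}^{-1}\partial_{x_i}\mathcal{C}\,\mathcal{C}^{-1}\vec{q}-\operatorname{tr}(\mathcal{C}^{-1}\partial_{x_i}\mathcal{C})\Big]^2$$ with $\mathcal{C}=\mathcal{C}(\vec{x})$. Then $\rho f$ is orthogonal to the tangent space $T_f\mathcal{M}_\Phi$ with respect to the weighted inner product $\langle g,h\rangle_f=\int_{\mathbb{R}^D}g\,h\,\frac{\mathrm{d}\vec{q}}{f}$ (the one defining $P_f$), i.e. for a.e. $\vec{x}\in\Omega$ and every $\varphi\in T_f\mathcal{M}_\Phi$, $\int_{\mathbb{R}^D}\rho(\vec{x},\vec{q})\,\varphi(\vec{x},\v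ec{q})\,\mathrm{d}\vec{q}=0$.
   Context: The tangent space of the Gaussian manifold at $f$ is $T_f\mathcal{M}_\Phi=\{\varphi:\varphi(\vec{x},\vec{q})=(\vec{q}^\top A(\vec{x})\vec{q}-\operatorname{tr}(A(\vec{x})\mathcal{C}(\vec{x})))f(\vec{x},\vec{q}),\ A(\vec{x})\text{ block-diagonal symmetric with }N\text{ blocks of size }d\times d\}$ (intersected with the weighted Sobolev space $\mathcal{H}$). $\rho$ is the remainder arising from the center-of-mass diffusion term $-\varepsilon\Delta_{\vec{x}}f$. *)

theory Defs
  imports "HOL-Analysis.Analysis"
begin

text \<open>Index of the configuration space R^D, D = N d: pairs (particle k, coordinate a),
  with 'n a type of N elements and 'd a type of d elements.\<close>

type_synonym ('n, 'd) mat = "real ^ ('n \<times> 'd) ^ ('n \<times> 'd)"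

definition block_diag :: "('n::finite, 'd::finite) mat \<Rightarrow> bool" where
  "block_diag M \<longleftrightarrow> (\<forall>k a l b. k \<noteq> l \<longrightarrow> M $ (k, a) $ (l, b) = 0)"

definition sym_mat :: "('n::finite, 'd::finite) mat \<Rightarrow> bool" where
  "sym_mat M \<longleftrightarrow> transpose M = M"

definition pos_def :: "('n::finite, 'd::finite) mat \<Rightarrow> bool" where
  "pos_def M \<longleftrightarrow> (\<forall>q. q \<noteq> 0 \<longrightarrow> q \<bullet> (M *v q) > 0)"

definition Zset :: "('n::finite, 'd::finite) mat set" where
  "Zset = {M. block_diag M \<and> sym_mat M \<and> pos_def M}"

fun Ck_on :: "nat \<Rightarrow> ('a::real_normed_vector \<Rightarrow> 'b::real_normed_vector) \<Rightarrow> 'a set \<Rightarrow> bool" where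
  "Ck_on 0 g S = continuous_on S g"
| "Ck_on (Suc k) g S = (\<exists>g'. (\<forall>x\<in>S. (g has_derivative g' x) (at x)) \<and>
      continuous_on S g \<and> (\<forall>h. Ck_on k (\<lambda>x. g' x h) S))"

definition smooth_on :: "'a::real_normed_vector set \<Rightarrow> ('a \<Rightarrow> 'b::real_normed_vector) \<Rightarrow> bool" where
  "smooth_on S g \<longleftrightarrow> (\<forall>k. Ck_on k g S)"

definition partialC :: "(real ^ 'd \<Rightarrow> ('n::finite, 'd::finite) mat) \<Rightarrow> 'd \<Rightarrow> real ^ 'd \<Rightarrow> ('n, 'd) mat" where
  "partialC C i x = vector_derivative (\<lambda>t. C (x + t *\<^sub>R axis i 1)) (at 0)"

definition gaussian :: "(real ^ 'd \<Rightarrow> ('n::finite, 'd::finite) mat) \<Rightarrow> real ^ 'd \<Rightarrow> real ^ ('n \<times> 'd) \<Rightarrow> real" where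
  "gaussian C x q = exp (- (1/2) * (q \<bullet> (matrix_inv (C x) *v q)))
      / sqrt ((2 * pi) ^ CARD('n \<times> 'd) * det (C x))"

definition rho :: "(real ^ 'd \<Rightarrow> ('n::finite, 'd::finite) mat) \<Rightarrow> real ^ 'd \<Rightarrow> real ^ ('n \<times> 'd) \<Rightarrow> real" where
  "rho C x q =
     (let Ci = matrix_inv (C x); P = (\<lambda>i. Ci ** partialC C i x) in
       (\<Sum>i\<in>UNIV. q \<bullet> ((P i ** P i ** Ci) *v q))
       - (1/2) * (\<Sum>i\<in>UNIV. trace (P i ** P i))
       - (1/4) * (\<Sum>i\<in>UNIV. (q \<bullet> ((P i ** Ci) *v q) - trace (P i))\<^sup>2))"

text \<open>Tangent space T_f M_Phi (without the intersection with the weighted Sobolev space).\<close>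
definition tangent_space :: "(real ^ 'd \<Rightarrow> ('n::finite, 'd::finite) mat)
    \<Rightarrow> (real ^ 'd \<Rightarrow> real ^ ('n \<times> 'd) \<Rightarrow> real) set" where
  "tangent_space C = {\<phi>. \<exists>A. (\<forall>x. block_diag (A x) \<and> sym_mat (A x)) \<and>
      \<phi> = (\<lambda>x q. (q \<bullet> (A x *v q) - trace (A x ** C x)) * gaussian C x q)}"

end

theory Submission
  imports Defs "HOL-Probability.Distributions"
begin


lemma pow_sum_le: fixes c t :: real assumes "c \<ge> 0"
  shows "(c + \<bar>t\<bar>)^k \<le> 2^k * (c^k + \<bar>t\<bar>^k)"
proof -
  have "c + \<bar>t\<bar> \<le> 2 * max c \<bar>t\<bar>" by simp
  then have "(c + \<bar>t\<bar>)^k \<le> (2 * max c \<bar>t\<bar>)^k" using assms by (intro power_mono) auto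
  also have "\<dots> = 2^k * (max c \<bar>t\<bar>)^k" by (simp add: power_mult_distrib)
  also have "(max c \<bar>t\<bar>)^k \<le> c^k + \<bar>t\<bar>^k" using assms
    by (cases "c \<le> \<bar>t\<bar>") (auto simp: max_def)
  finally show ?thesis by simp
qed

lemma int1d:
  fixes \<nu> c :: real assumes "\<nu> > 0" "c \<ge> 0"
  shows "integrable lborel (\<lambda>t::real. (c + \<bar>t\<bar>)^k * exp (- \<nu> * t\<^sup>2))"
proof -
  define \<sigma> where "\<sigma> = sqrt (1 / (2*\<nu>))"
  have s2: "2 * \<sigma>\<^sup>2 = 1/\<nu>" using assms by (simp add: \<sigma>_def)
  define K where "K = sqrt (2 * pi * \<sigma>\<^sup>2)"
  have sp: "\<sigma> > 0" using assms by (simp add: \<sigma>_def)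
  have e: "exp (- \<nu> * t\<^sup>2) = K * normal_density 0 \<sigma> t" for t
    using assms s2 sp by (simp add: normal_density_def K_def field_simps)
  have i: "integrable lborel (\<lambda>t. 2^k * K * (c^k * normal_density 0 \<sigma> t + normal_density 0 \<sigma> t * \<bar>t\<bar>^k))"
  proof -
    have i1: "integrable lborel (\<lambda>t. normal_density 0 \<sigma> t * \<bar>t\<bar>^k)"
      using integrable_normal_moment_abs[where \<mu>=0 and \<sigma>=\<sigma> and k=k] sp by (simp only: diff_zero)
    show ?thesis by (intro integrable_mult_right Bochner_Integration.integrable_add i1 integrable_normal_density sp)
  qed
  show ?thesis
  proof (rule Bochner_Integration.integrable_bound[OF i])
    show "(\<lambda>t::real. (c + \<bar>t\<bar>)^k * exp (- \<nu> * t\<^sup>2)) \<in> borel_measurable lborel" by measurable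
    have "norm ((c + \<bar>t\<bar>)^k * exp (- \<nu> * t\<^sup>2)) \<le> norm (2^k * K * (c^k * normal_density 0 \<sigma> t + normal_density 0 \<sigma> t * \<bar>t\<bar>^k))" for t
    proof -
      have K: "K \<ge> 0" by (simp add: K_def)
      have "norm ((c + \<bar>t\<bar>)^k * exp (- \<nu> * t\<^sup>2)) = (c + \<bar>t\<bar>)^k * (K * normal_density 0 \<sigma> t)"
        using assms by (simp add: e[symmetric])
      also have "\<dots> \<le> (2^k * (c^k + \<bar>t\<bar>^k)) * (K * normal_density 0 \<sigma> t)"
        using K by (intro mult_right_mono pow_sum_le assms) auto
      also have "\<dots> = 2^k * K * (c^k * normal_density 0 \<sigma> t + normal_density 0 \<sigma> t * \<bar>t\<bar>^k)"
        by (simp add: algebra_simps)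
      also have "\<dots> \<le> norm \<dots>" by simp
      finally show ?thesis .
    qed
    then show "AE t in lborel. norm ((c + \<bar>t\<bar>)^k * exp (- \<nu> * t\<^sup>2)) \<le> norm (2^k * K * (c^k * normal_density 0 \<sigma> t + normal_density 0 \<sigma> t * \<bar>t\<bar>^k))"
      by simp
  qed
qed

lemma one_plus_sum_le_prod:
  fixes x :: "'b \<Rightarrow> real" assumes "finite S" "\<And>b. b \<in> S \<Longrightarrow> x b \<ge> 0"
  shows "1 + (\<Sum>b\<in>S. x b) \<le> (\<Prod>b\<in>S. 1 + x b)"
  using assms
proof (induction S rule: finite_induct)
  case empty then show ?case by simp
next
  case (insert a S)
  have xa: "x a \<ge> 0" using insert by auto
  have S: "1 + (\<Sum>b\<in>S. x b) \<le> (\<Prod>b\<in>S. 1 + x b)" using insert by auto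
  have s0: "(\<Sum>b\<in>S. x b) \<ge> 0" using insert by (auto intro: sum_nonneg)
  have "1 + (\<Sum>b\<in>insert a S. x b) = 1 + x a + (\<Sum>b\<in>S. x b)" using insert by simp
  also have "\<dots> \<le> (1 + x a) * (1 + (\<Sum>b\<in>S. x b))" using xa s0 by (simp add: algebra_simps)
  also have "\<dots> \<le> (1 + x a) * (\<Prod>b\<in>S. 1 + x b)" using xa S by (intro mult_left_mono) auto
  also have "\<dots> = (\<Prod>b\<in>insert a S. 1 + x b)" using insert by simp
  finally show ?case .
qed

lemma intD:
  fixes \<nu> :: real assumes "\<nu> > 0"
  shows "integrable lborel (\<lambda>q::'a::euclidean_space. (1 + norm q)^k * exp (- \<nu> * (norm q)\<^sup>2))"
proof -
  define W where "W = (\<lambda>q::'a. \<Prod>b\<in>Basis. (1 + \<bar>q \<bullet> b\<bar>)^k * exp (- \<nu> * (q \<bullet> b)\<^sup>2))"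
  have Wm: "W \<in> borel_measurable lborel" unfolding W_def by measurable
  have W0: "W q \<ge> 0" for q unfolding W_def by (intro prod_nonneg) auto
  have fin: "(\<integral>\<^sup>+t. ennreal ((1 + \<bar>t\<bar>)^k * exp (- \<nu> * t\<^sup>2)) \<partial>lborel) < \<infinity>"
    using int1d[OF assms, of 1 k] unfolding integrable_iff_bounded by simp
  have "(\<integral>\<^sup>+q. ennreal (norm (W q)) \<partial>lborel) = (\<integral>\<^sup>+q. (\<Prod>b\<in>Basis. ennreal ((1 + \<bar>(q::'a) \<bullet> b\<bar>)^k * exp (- \<nu> * (q \<bullet> b)\<^sup>2))) \<partial>lborel)"
  proof (rule nn_integral_cong)
    fix q
    have "ennreal (norm (W q)) = ennreal (W q)" using W0[of q] by simp
    also have "\<dots> = (\<Prod>b\<in>Basis. ennreal ((1 + \<bar>q \<bullet> b\<bar>)^k * exp (- \<nu> * (q \<bullet> b)\<^sup>2)))"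
      unfolding W_def by (rule prod_ennreal[symmetric]) auto
    finally show "ennreal (norm (W q)) = (\<Prod>b\<in>Basis. ennreal ((1 + \<bar>q \<bullet> b\<bar>)^k * exp (- \<nu> * (q \<bullet> b)\<^sup>2)))" .
  qed
  also have "\<dots> = (\<Prod>b\<in>(Basis::'a set). (\<integral>\<^sup>+t. ennreal ((1 + \<bar>t\<bar>)^k * exp (- \<nu> * t\<^sup>2)) \<partial>lborel))"
    by (rule nn_integral_lborel_prod) auto
  also have "\<dots> < \<infinity>" using fin by (simp add: power_less_top_ennreal)
  finally have iW: "integrable lborel W" unfolding integrable_iff_bounded using Wm by simp
  show ?thesis
  proof (rule Bochner_Integration.integrable_bound[OF iW])
    show "(\<lambda>q::'a. (1 + norm q)^k * exp (- \<nu> * (norm q)\<^sup>2)) \<in> borel_measurable lborel" by measurable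
    have "norm ((1 + norm q)^k * exp (- \<nu> * (norm q)\<^sup>2)) \<le> norm (W q)" for q
    proof -
      have "1 + norm q \<le> 1 + (\<Sum>b\<in>Basis. \<bar>q \<bullet> b\<bar>)" using norm_le_l1[of q] by simp
      also have "\<dots> \<le> (\<Prod>b\<in>Basis. 1 + \<bar>q \<bullet> b\<bar>)" by (rule one_plus_sum_le_prod) auto
      finally have "(1 + norm q)^k \<le> (\<Prod>b\<in>(Basis::'a set). 1 + \<bar>q \<bullet> b\<bar>)^k"
        by (intro power_mono) auto
      also have "\<dots> = (\<Prod>b\<in>Basis. (1 + \<bar>q \<bullet> b\<bar>)^k)" by (simp add: prod_power_distrib)
      finally have A: "(1 + norm q)^k \<le> (\<Prod>b\<in>Basis. (1 + \<bar>q \<bullet> b\<bar>)^k)" .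
      have "(norm q)\<^sup>2 = (\<Sum>b\<in>Basis. (q \<bullet> b)\<^sup>2)"
        unfolding power2_norm_eq_inner by (subst euclidean_inner) (simp add: power2_eq_square)
      then have B: "exp (- \<nu> * (norm q)\<^sup>2) = (\<Prod>b\<in>Basis. exp (- \<nu> * (q \<bullet> b)\<^sup>2))"
        by (simp add: sum_distrib_left exp_sum sum_negf[symmetric])
      have "norm ((1 + norm q)^k * exp (- \<nu> * (norm q)\<^sup>2)) = (1 + norm q)^k * exp (- \<nu> * (norm q)\<^sup>2)"
        by simp
      also have "\<dots> \<le> (\<Prod>b\<in>Basis. (1 + \<bar>q \<bullet> b\<bar>)^k) * (\<Prod>b\<in>Basis. exp (- \<nu> * (q \<bullet> b)\<^sup>2))"
        unfolding B by (intro mult_right_mono A) (auto intro: prod_nonneg)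
      also have "\<dots> = W q" unfolding W_def by (simp add: prod.distrib)
      also have "\<dots> \<le> norm (W q)" by simp
      finally show ?thesis .
    qed
    then show "AE q in lborel. norm ((1 + norm q)^k * exp (- \<nu> * (norm q)\<^sup>2)) \<le> norm (W q)" by simp
  qed
qed



inductive polyfun :: "(real^'i::finite \<Rightarrow> real) \<Rightarrow> bool" where
  pconst: "polyfun (\<lambda>q. c)"
| pcoord: "polyfun (\<lambda>q. q $ a)"
| padd: "polyfun p \<Longrightarrow> polyfun r \<Longrightarrow> polyfun (\<lambda>q. p q + r q)"
| pmult: "polyfun p \<Longrightarrow> polyfun r \<Longrightarrow> polyfun (\<lambda>q. p q * r q)"

lemma polyfun_sum: "finite S \<Longrightarrow> (\<And>i. i \<in> S \<Longrightarrow> polyfun (f i)) \<Longrightarrow> polyfun (\<lambda>q. \<Sum>i\<in>S. f i q)"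
  by (induction S rule: finite_induct) (auto intro: polyfun.intros)

lemma polyfun_uminus: "polyfun p \<Longrightarrow> polyfun (\<lambda>q. - p q)"
  using pmult[OF pconst[of "-1"]] by simp

lemma polyfun_diff: "polyfun p \<Longrightarrow> polyfun r \<Longrightarrow> polyfun (\<lambda>q. p q - r q)"
  using padd[OF _ polyfun_uminus] by simp

lemma polyfun_power: "polyfun p \<Longrightarrow> polyfun (\<lambda>q. p q ^ n)"
  by (induction n) (auto intro: polyfun.intros)

lemma polyfun_mv: "polyfun (\<lambda>q. (M *v q) $ a)"
  unfolding matrix_vector_mult_def by (auto intro!: polyfun_sum polyfun.intros)

lemma polyfun_inner_mv: "polyfun (\<lambda>q. (M *v q) \<bullet> (N *v q))"
  unfolding inner_vec_def by (auto intro!: polyfun_sum polyfun.intros polyfun_mv)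

lemma polyfun_quad: "polyfun (\<lambda>q. q \<bullet> (N *v q))"
  using polyfun_inner_mv[of "mat 1" N] by simp

lemma polyfun_continuous: "polyfun p \<Longrightarrow> continuous_on UNIV p"
  by (induction rule: polyfun.induct) (auto intro!: continuous_intros)

lemma polyfun_measurable: "polyfun p \<Longrightarrow> p \<in> borel_measurable borel"
  by (rule borel_measurable_continuous_onI[OF polyfun_continuous])

lemma polyfun_bound: "polyfun p \<Longrightarrow> \<exists>B k. B \<ge> 0 \<and> (\<forall>q. \<bar>p q\<bar> \<le> B * (1 + norm q)^k)"
proof (induction rule: polyfun.induct)
  case (pconst c) then show ?case by (intro exI[of _ "\<bar>c\<bar>"] exI[of _ 0]) auto
next
  case (pcoord a)
  have "\<bar>q $ a\<bar> \<le> 1 * (1 + norm q)^1" for q :: "real^'a"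
    using component_le_norm_cart[of q a] by simp
  then show ?case by (intro exI[of _ 1] exI[of _ 1]) auto
next
  case (padd p r)
  then obtain B1 k1 B2 k2 where b: "B1 \<ge> 0" "B2 \<ge> 0" "\<And>q. \<bar>p q\<bar> \<le> B1 * (1 + norm q)^k1"
    "\<And>q. \<bar>r q\<bar> \<le> B2 * (1 + norm q)^k2" by blast
  have "\<bar>p q + r q\<bar> \<le> (B1 + B2) * (1 + norm q)^(k1 + k2)" for q
  proof -
    have m1: "(1 + norm q)^k1 \<le> (1 + norm q)^(k1+k2)" "(1 + norm q)^k2 \<le> (1 + norm q)^(k1+k2)"
      by (auto intro: power_increasing)
    have "\<bar>p q + r q\<bar> \<le> B1 * (1 + norm q)^k1 + B2 * (1 + norm q)^k2"
      using b(3,4)[of q] by linarith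
    also have "\<dots> \<le> B1 * (1 + norm q)^(k1+k2) + B2 * (1 + norm q)^(k1+k2)"
      using b m1 by (intro add_mono mult_left_mono) auto
    finally show ?thesis by (simp add: algebra_simps)
  qed
  then show ?case using b by (intro exI[of _ "B1+B2"] exI[of _ "k1+k2"]) auto
next
  case (pmult p r)
  then obtain B1 k1 B2 k2 where b: "B1 \<ge> 0" "B2 \<ge> 0" "\<And>q. \<bar>p q\<bar> \<le> B1 * (1 + norm q)^k1"
    "\<And>q. \<bar>r q\<bar> \<le> B2 * (1 + norm q)^k2" by blast
  have "\<bar>p q * r q\<bar> \<le> (B1 * B2) * (1 + norm q)^(k1 + k2)" for q
  proof -
    have "\<bar>p q * r q\<bar> = \<bar>p q\<bar> * \<bar>r q\<bar>" by (simp add: abs_mult)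
    also have "\<dots> \<le> (B1 * (1 + norm q)^k1) * (B2 * (1 + norm q)^k2)"
      using b(3,4)[of q] by (intro mult_mono) auto
    finally show ?thesis by (simp add: algebra_simps power_add)
  qed
  then show ?case using b by (intro exI[of _ "B1*B2"] exI[of _ "k1+k2"]) auto
qed



locale gset =
  fixes K :: "real^'i::finite^'i" and \<mu> :: real
  assumes Ksym: "transpose K = K" and mu: "\<mu> > 0"
    and Kpd: "\<And>q. \<mu> * (norm q)\<^sup>2 \<le> q \<bullet> (K *v q)"
begin

definition g :: "real^'i \<Rightarrow> real" where
  "g q = exp (- (1/2) * (q \<bullet> (K *v q)))"

lemma g_pos: "g q > 0" by (simp add: g_def)

lemma g_cont: "continuous_on UNIV g"
  unfolding g_def using polyfun_continuous[OF polyfun_quad[of K]]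
  by (auto intro!: continuous_intros)

lemma g_meas: "g \<in> borel_measurable borel"
  by (rule borel_measurable_continuous_onI[OF g_cont])

lemma g_le: "g y \<le> exp (- (\<mu>/2) * (norm y)\<^sup>2)"
  unfolding g_def using Kpd[of y] by simp

lemma dom:
  assumes "polyfun p"
  shows "\<exists>W. integrable lborel W \<and> (\<forall>q s. \<bar>s\<bar> \<le> 1 \<longrightarrow> \<bar>p (q + s *\<^sub>R v) * g (q + s *\<^sub>R v)\<bar> \<le> W q)"
proof -
  obtain B k where B: "B \<ge> 0" "\<And>q. \<bar>p q\<bar> \<le> B * (1 + norm q)^k"
    using polyfun_bound[OF assms] by blast
  define c where "c = B * (1 + norm v)^k * exp (\<mu>/2 * (norm v)\<^sup>2)"
  have c0: "c \<ge> 0" using B by (simp add: c_def)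
  define W where "W = (\<lambda>q::real^'i. c * ((1 + norm q)^k * exp (- (\<mu>/4) * (norm q)\<^sup>2)))"
  have iW: "integrable lborel W" unfolding W_def
    using intD[of "\<mu>/4" k] mu by (intro integrable_mult_right) auto
  have "\<bar>p (q + s *\<^sub>R v) * g (q + s *\<^sub>R v)\<bar> \<le> W q" if s: "\<bar>s\<bar> \<le> 1" for q s
  proof -
    define y where "y = q + s *\<^sub>R v"
    have nsv: "norm (s *\<^sub>R v) \<le> norm v" using s by (simp add: mult_left_le_one_le)
    have ny: "norm y \<le> norm q + norm v" unfolding y_def using norm_triangle_ineq[of q "s *\<^sub>R v"] nsv by linarith
    have qy: "q = y - s *\<^sub>R v" by (simp add: y_def)
    have nq: "norm q \<le> norm y + norm v" using norm_triangle_ineq4[of y "s *\<^sub>R v"] nsv unfolding qy[symmetric] by linarith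
    have nqv: "norm q * norm v \<ge> 0" by simp
    have "(1 + norm q) * (1 + norm v) = 1 + norm q + norm v + norm q * norm v" by (simp add: algebra_simps)
    then have "1 + norm y \<le> (1 + norm q) * (1 + norm v)" using ny nqv by linarith
    then have "(1 + norm y)^k \<le> ((1 + norm q) * (1 + norm v))^k" by (intro power_mono) auto
    then have "B * (1 + norm y)^k \<le> B * ((1 + norm q)^k * (1 + norm v)^k)"
      using B(1) by (simp add: power_mult_distrib mult_left_mono)
    then have P: "\<bar>p y\<bar> \<le> B * ((1 + norm q)^k * (1 + norm v)^k)"
      using B(2)[of y] by linarith
    have sq: "(a+b)\<^sup>2 \<le> 2*a\<^sup>2 + 2*b\<^sup>2" for a b :: real
    proof -
      have "2*a\<^sup>2 + 2*b\<^sup>2 - (a+b)\<^sup>2 = (a-b)\<^sup>2" by (simp add: power2_eq_square algebra_simps)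
      moreover have "(a-b)\<^sup>2 \<ge> 0" by simp
      ultimately show ?thesis by linarith
    qed
    have "(norm q)\<^sup>2 \<le> (norm y + norm v)\<^sup>2" using nq by (intro power_mono) auto
    also have "\<dots> \<le> 2 * (norm y)\<^sup>2 + 2 * (norm v)\<^sup>2" by (rule sq)
    finally have "(\<mu>/4) * (norm q)\<^sup>2 \<le> (\<mu>/4) * (2 * (norm y)\<^sup>2 + 2 * (norm v)\<^sup>2)"
      using mu by (intro mult_left_mono) auto
    then have "- (\<mu>/2) * (norm y)\<^sup>2 \<le> - (\<mu>/4) * (norm q)\<^sup>2 + \<mu>/2 * (norm v)\<^sup>2"
      by (simp add: algebra_simps)
    then have "exp (- (\<mu>/2) * (norm y)\<^sup>2) \<le> exp (\<mu>/2 * (norm v)\<^sup>2 + - (\<mu>/4) * (norm q)\<^sup>2)"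
      by (simp add: add.commute)
    then have G: "g y \<le> exp (\<mu>/2 * (norm v)\<^sup>2) * exp (- (\<mu>/4) * (norm q)\<^sup>2)"
      using g_le[of y] unfolding exp_add by linarith
    have "\<bar>p y * g y\<bar> = \<bar>p y\<bar> * g y" using g_pos[of y] by (simp add: abs_mult)
    also have "\<dots> \<le> (B * ((1 + norm q)^k * (1 + norm v)^k)) * (exp (\<mu>/2 * (norm v)\<^sup>2) * exp (- (\<mu>/4) * (norm q)\<^sup>2))"
      using P G g_pos[of y] by (intro mult_mono) auto
    also have "\<dots> = W q" unfolding W_def c_def by (simp add: algebra_simps)
    finally show ?thesis unfolding y_def .
  qed
  then show ?thesis using iW by blast
qed

lemma integrable_pg:
  assumes "polyfun p" shows "integrable lborel (\<lambda>q. p q * g q)"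
proof -
  obtain W where W: "integrable lborel W" "\<And>q s. \<bar>s\<bar> \<le> 1 \<Longrightarrow> \<bar>p (q + s *\<^sub>R 0) * g (q + s *\<^sub>R 0)\<bar> \<le> W q"
    using dom[OF assms, of 0] by blast
  show ?thesis
  proof (rule Bochner_Integration.integrable_bound[OF W(1)])
    show "(\<lambda>q. p q * g q) \<in> borel_measurable lborel"
      using polyfun_measurable[OF assms] g_meas by measurable
    show "AE q in lborel. norm (p q * g q) \<le> norm (W q)"
      using W(2)[of 0] by (auto intro: order_trans[OF _ abs_ge_self])
  qed
qed

lemma Kswap: "y \<bullet> (K *v w) = (K *v y) \<bullet> w"
proof -
  have "y \<bullet> (K *v w) = (y v* K) \<bullet> w" by (simp add: dot_lmul_matrix)
  also have "y v* K = transpose K *v y" by simp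
  finally show ?thesis by (simp add: Ksym)
qed

lemma shift_deriv:
  fixes f :: "real^'i \<Rightarrow> real"
  assumes "\<And>y. ((\<lambda>s. f (y + s *\<^sub>R v)) has_real_derivative d y) (at 0)"
  shows "((\<lambda>t. f (q + t *\<^sub>R v)) has_real_derivative d (q + t *\<^sub>R v)) (at t)"
proof -
  have "((\<lambda>s. f ((q + t *\<^sub>R v) + s *\<^sub>R v)) has_real_derivative d (q + t *\<^sub>R v)) (at 0)"
    by (rule assms)
  moreover have "(\<lambda>s. f ((q + t *\<^sub>R v) + s *\<^sub>R v)) = (\<lambda>s. (\<lambda>t. f (q + t *\<^sub>R v)) (s + t))"
  proof
    fix s
    have "q + t *\<^sub>R v + s *\<^sub>R v = q + (s + t) *\<^sub>R v" by (simp add: scaleR_add_left)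
    then show "f ((q + t *\<^sub>R v) + s *\<^sub>R v) = (\<lambda>t. f (q + t *\<^sub>R v)) (s + t)" by (simp only:)
  qed
  ultimately show ?thesis using DERIV_shift[of "\<lambda>t. f (q + t *\<^sub>R v)" "d (q + t *\<^sub>R v)" 0 t] by simp
qed

lemma g_deriv: "((\<lambda>s. g (y + s *\<^sub>R v)) has_real_derivative (- ((K *v y) \<bullet> v) * g y)) (at 0)"
proof -
  have e: "(y + s *\<^sub>R v) \<bullet> (K *v (y + s *\<^sub>R v)) = y \<bullet> (K *v y) + s * (y \<bullet> (K *v v) + v \<bullet> (K *v y)) + s * s * (v \<bullet> (K *v v))" for s
    by (simp add: matrix_vector_right_distrib matrix_vector_mult_scaleR inner_add_left inner_add_right algebra_simps)
  have "((\<lambda>s. exp (- (1/2) * (y \<bullet> (K *v y) + s * (y \<bullet> (K *v v) + v \<bullet> (K *v y)) + s * s * (v \<bullet> (K *v v)))))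
     has_real_derivative exp (- (1/2) * (y \<bullet> (K *v y) + 0 * (y \<bullet> (K *v v) + v \<bullet> (K *v y)) + 0 * 0 * (v \<bullet> (K *v v)))) * (- (1/2) * ((y \<bullet> (K *v v) + v \<bullet> (K *v y)) + (0 * (v \<bullet> (K *v v)) + 0 * (v \<bullet> (K *v v)))))) (at 0)"
    by (auto intro!: derivative_eq_intros)
  moreover have "y \<bullet> (K *v v) = (K *v y) \<bullet> v" by (rule Kswap)
  moreover have "v \<bullet> (K *v y) = (K *v y) \<bullet> v" by (simp add: inner_commute)
  ultimately show ?thesis unfolding g_def e by (simp add: algebra_simps)
qed

lemma polyfun_Kv: "polyfun (\<lambda>q. (M *v q) \<bullet> w)"
  unfolding inner_vec_def by (auto intro!: polyfun_sum polyfun.intros polyfun_mv)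

lemma translate_integral:
  fixes F :: "real^'i \<Rightarrow> real"
  assumes Fm: "F \<in> borel_measurable borel"
  shows "integral\<^sup>L lborel (\<lambda>q. F (c + q)) = integral\<^sup>L lborel F"
    and "integrable lborel F \<Longrightarrow> integrable lborel (\<lambda>q. F (c + q))"
proof -
  have m: "(+) c \<in> measurable lborel borel" by measurable
  have "integral\<^sup>L (distr lborel borel ((+) c)) F = integral\<^sup>L lborel (\<lambda>q. F (c + q))"
    using integral_distr[OF m, of F] Fm by simp
  then show "integral\<^sup>L lborel (\<lambda>q. F (c + q)) = integral\<^sup>L lborel F"
    by (simp add: lborel_distr_plus)
  show "integrable lborel (\<lambda>q. F (c + q))" if "integrable lborel F"
    using integrable_distr_eq[OF m, of F] Fm that by (simp add: lborel_distr_plus)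
qed

lemma stein:
  assumes ph: "polyfun h" and pD: "polyfun D"
    and dh: "\<And>y. ((\<lambda>s. h (y + s *\<^sub>R v)) has_real_derivative D y) (at 0)"
  shows "integral\<^sup>L lborel (\<lambda>q. ((K *v q) \<bullet> v * h q) * g q) = integral\<^sup>L lborel (\<lambda>q. D q * g q)"
proof -
  define F where "F = (\<lambda>q. h q * g q)"
  define P' where "P' = (\<lambda>q. D q - (K *v q) \<bullet> v * h q)"
  define F' where "F' = (\<lambda>q. P' q * g q)"
  have pP': "polyfun P'" unfolding P'_def
    by (intro polyfun_diff pD pmult polyfun_Kv ph)
  have dF: "((\<lambda>s. F (y + s *\<^sub>R v)) has_real_derivative F' y) (at 0)" for y
  proof -
    have "((\<lambda>s. h (y + s *\<^sub>R v) * g (y + s *\<^sub>R v)) has_real_derivative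
        (D y * g (y + 0 *\<^sub>R v) + (- ((K *v y) \<bullet> v) * g y) * h (y + 0 *\<^sub>R v))) (at 0)"
      by (rule DERIV_mult[OF dh g_deriv])
    then show ?thesis unfolding F_def F'_def P'_def by (simp add: algebra_simps)
  qed
  have dFt: "((\<lambda>t. F (q + t *\<^sub>R v)) has_real_derivative F' (q + t *\<^sub>R v)) (at t)" for q t
    by (rule shift_deriv[OF dF])
  obtain W where iW: "integrable lborel W"
    and W: "\<And>q s. \<bar>s\<bar> \<le> 1 \<Longrightarrow> \<bar>P' (q + s *\<^sub>R v) * g (q + s *\<^sub>R v)\<bar> \<le> W q"
    using dom[OF pP', of v] by blast
  have iF: "integrable lborel F" unfolding F_def by (rule integrable_pg[OF ph])
  have iF': "integrable lborel F'" unfolding F'_def by (rule integrable_pg[OF pP'])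
  have Fm: "F \<in> borel_measurable borel" unfolding F_def
    using polyfun_measurable[OF ph] g_meas by measurable
  have F'm: "F' \<in> borel_measurable borel" unfolding F'_def
    using polyfun_measurable[OF pP'] g_meas by measurable
  define t where "t = (\<lambda>n::nat. inverse (real (Suc n)))"
  have t0: "t n > 0" "t n \<le> 1" for n unfolding t_def by (auto simp: field_simps)
  define sq where "sq = (\<lambda>n q. (F (q + t n *\<^sub>R v) - F q) / t n)"
  have shiftF: "(\<lambda>q. F (q + c)) = (\<lambda>q. F (c + q))" for c by (simp add: add.commute)
  have int0: "integral\<^sup>L lborel (sq n) = 0" for n
  proof -
    have i1: "integrable lborel (\<lambda>q. F (q + t n *\<^sub>R v))"
      unfolding shiftF by (rule translate_integral(2)[OF Fm iF])
    have "integral\<^sup>L lborel (sq n) = (integral\<^sup>L lborel (\<lambda>q. F (q + t n *\<^sub>R v)) - integral\<^sup>L lborel F) / t n"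
      unfolding sq_def by (simp add: Bochner_Integration.integral_diff[OF i1 iF])
    also have "integral\<^sup>L lborel (\<lambda>q. F (q + t n *\<^sub>R v)) = integral\<^sup>L lborel F"
      unfolding shiftF by (rule translate_integral(1)[OF Fm])
    finally show ?thesis by simp
  qed
  have "(\<lambda>n. integral\<^sup>L lborel (sq n)) \<longlonglongrightarrow> integral\<^sup>L lborel F'"
  proof (rule integral_dominated_convergence[where w=W])
    show "F' \<in> borel_measurable lborel" using F'm by simp
    show "sq n \<in> borel_measurable lborel" for n unfolding sq_def using Fm by measurable
    show "integrable lborel W" by (rule iW)
    show "AE q in lborel. (\<lambda>n. sq n q) \<longlonglongrightarrow> F' q"
    proof (rule AE_I2)
      fix q
      have "((\<lambda>s. F (q + s *\<^sub>R v)) has_real_derivative F' q) (at 0)" using dF[of q] .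
      then have "((\<lambda>y. (F (q + y *\<^sub>R v) - F (q + 0 *\<^sub>R v)) / (y - 0)) \<longlongrightarrow> F' q) (at 0)"
        unfolding has_field_derivative_iff .
      then have "((\<lambda>y. (F (q + y *\<^sub>R v) - F q) / y) \<circ> t) \<longlonglongrightarrow> F' q"
        unfolding tendsto_at_iff_sequentially using t0 LIMSEQ_inverse_real_of_nat
        by (auto simp: t_def)
      then show "(\<lambda>n. sq n q) \<longlonglongrightarrow> F' q" by (simp add: sq_def o_def)
    qed
    show "AE q in lborel. norm (sq n q) \<le> W q" for n
    proof (rule AE_I2)
      fix q
      obtain z where z: "0 < z" "z < t n"
        and mv: "F (q + t n *\<^sub>R v) - F (q + 0 *\<^sub>R v) = (t n - 0) * F' (q + z *\<^sub>R v)"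
        using MVT2[of 0 "t n" "\<lambda>s. F (q + s *\<^sub>R v)" "\<lambda>s. F' (q + s *\<^sub>R v)"] t0[of n] dFt by blast
      have "sq n q = F' (q + z *\<^sub>R v)" unfolding sq_def using mv t0[of n] by simp
      moreover have "\<bar>F' (q + z *\<^sub>R v)\<bar> \<le> W q" unfolding F'_def
        using W[of z q] z t0[of n] by simp
      ultimately show "norm (sq n q) \<le> W q" by simp
    qed
  qed
  then have "integral\<^sup>L lborel F' = 0" using int0 LIMSEQ_unique[OF tendsto_const[of 0]] by (simp add: int0)
  moreover have "integral\<^sup>L lborel F' = integral\<^sup>L lborel (\<lambda>q. D q * g q) - integral\<^sup>L lborel (\<lambda>q. ((K *v q) \<bullet> v * h q) * g q)"
  proof -
    have "F' = (\<lambda>q. D q * g q - ((K *v q) \<bullet> v * h q) * g q)" unfolding F'_def P'_def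
      by (simp add: algebra_simps)
    then show ?thesis
      by (simp add: Bochner_Integration.integral_diff[OF integrable_pg[OF pD] integrable_pg[OF pmult[OF polyfun_Kv ph]]])
  qed
  ultimately show ?thesis by simp
qed

end



locale gset2 = gset K \<mu> for K :: "real^'i::finite^'i" and \<mu> +
  fixes C :: "real^'i^'i"
  assumes Csym: "transpose C = C" and KC: "K ** C = mat 1"
begin

definition E :: "(real^'i \<Rightarrow> real) \<Rightarrow> real" where
  "E p = integral\<^sup>L lborel (\<lambda>q. p q * g q)"

lemma E_add: "polyfun p \<Longrightarrow> polyfun r \<Longrightarrow> E (\<lambda>q. p q + r q) = E p + E r"
  unfolding E_def by (simp add: distrib_right Bochner_Integration.integral_add[OF integrable_pg integrable_pg])

lemma E_diff: "polyfun p \<Longrightarrow> polyfun r \<Longrightarrow> E (\<lambda>q. p q - r q) = E p - E r"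
  unfolding E_def by (simp add: left_diff_distrib Bochner_Integration.integral_diff[OF integrable_pg integrable_pg])

lemma E_cmult: "E (\<lambda>q. c * p q) = c * E p"
  unfolding E_def by (simp add: mult.assoc)

lemma E_sum: "finite S \<Longrightarrow> (\<And>i. i \<in> S \<Longrightarrow> polyfun (f i)) \<Longrightarrow> E (\<lambda>q. \<Sum>i\<in>S. f i q) = (\<Sum>i\<in>S. E (f i))"
  unfolding E_def by (simp add: sum_distrib_right Bochner_Integration.integral_sum[OF integrable_pg])

lemma qa: "(K *v q) \<bullet> (C *v axis a 1) = q $ a"
proof -
  have "(K *v q) \<bullet> (C *v axis a 1) = q \<bullet> (K *v (C *v axis a 1))" by (simp add: Kswap)
  also have "K *v (C *v axis a 1) = axis a 1" by (simp add: matrix_vector_mul_assoc KC)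
  finally show ?thesis by (simp add: inner_axis)
qed

lemma mv_axis: "((X::real^'i^'i) *v axis a 1) $ a = X $ a $ a"
proof -
  have "(\<Sum>j\<in>UNIV. X$a$j * (axis a 1 :: real^'i) $ j) = (\<Sum>j\<in>UNIV. if j = a then X$a$j else 0)"
    by (rule sum.cong) (auto simp: axis_def)
  then show ?thesis by (simp add: matrix_vector_mult_def)
qed

lemma deriv_mv: "((\<lambda>s. (M *v (y + s *\<^sub>R v)) $ a) has_real_derivative (M *v v) $ a) (at 0)"
proof -
  have e: "(M *v (y + s *\<^sub>R v)) $ a = (M *v y) $ a + s * (M *v v) $ a" for s
    by (simp add: matrix_vector_right_distrib matrix_vector_mult_scaleR)
  show ?thesis unfolding e by (auto intro!: derivative_eq_intros)
qed

lemma L: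
  assumes ph: "polyfun h" and pD: "\<And>a. polyfun (Dh a)"
    and dh: "\<And>a y. ((\<lambda>s. h (y + s *\<^sub>R (C *v axis a 1))) has_real_derivative Dh a y) (at 0)"
  shows "E (\<lambda>q. (q \<bullet> (M *v q) - trace (M ** C)) * h q) = (\<Sum>a\<in>UNIV. E (\<lambda>q. (M *v q) $ a * Dh a q))"
proof -
  have one: "E (\<lambda>q. q $ a * ((M *v q) $ a * h q)) = (M ** C) $ a $ a * E h + E (\<lambda>q. (M *v q) $ a * Dh a q)" for a
  proof -
    define v where "v = C *v axis a 1"
    have d: "((\<lambda>s. (M *v (y + s *\<^sub>R v)) $ a * h (y + s *\<^sub>R v)) has_real_derivative
       ((M *v v) $ a * h (y + 0 *\<^sub>R v) + Dh a y * (M *v (y + 0 *\<^sub>R v)) $ a)) (at 0)" for y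
      unfolding v_def by (rule DERIV_mult[OF deriv_mv dh])
    have d': "((\<lambda>s. (M *v (y + s *\<^sub>R v)) $ a * h (y + s *\<^sub>R v)) has_real_derivative
       ((M *v v) $ a * h y + (M *v y) $ a * Dh a y)) (at 0)" for y
      using d[of y] by (simp add: mult.commute)
    have st: "integral\<^sup>L lborel (\<lambda>q. ((K *v q) \<bullet> v * ((M *v q) $ a * h q)) * g q)
      = integral\<^sup>L lborel (\<lambda>q. ((M *v v) $ a * h q + (M *v q) $ a * Dh a q) * g q)"
      by (rule stein) (auto intro!: polyfun.intros polyfun_mv ph pD d')
    have "E (\<lambda>q. q $ a * ((M *v q) $ a * h q)) = E (\<lambda>q. (M *v v) $ a * h q + (M *v q) $ a * Dh a q)"
      using st unfolding E_def v_def qa .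
    also have "\<dots> = (M *v v) $ a * E h + E (\<lambda>q. (M *v q) $ a * Dh a q)"
      by (subst E_add) (auto intro!: polyfun.intros polyfun_mv ph pD simp: E_cmult)
    also have "(M *v v) $ a = (M ** C) $ a $ a" unfolding v_def by (simp add: matrix_vector_mul_assoc mv_axis)
    finally show ?thesis .
  qed
  have "E (\<lambda>q. (q \<bullet> (M *v q) - trace (M ** C)) * h q) = E (\<lambda>q. (\<Sum>a\<in>UNIV. q $ a * ((M *v q) $ a * h q)) - trace (M ** C) * h q)"
    by (simp add: inner_vec_def left_diff_distrib sum_distrib_right mult.assoc)
  also have "\<dots> = (\<Sum>a\<in>UNIV. E (\<lambda>q. q $ a * ((M *v q) $ a * h q))) - trace (M ** C) * E h"
  proof -
    have "E (\<lambda>q. \<Sum>a\<in>UNIV. q $ a * ((M *v q) $ a * h q)) = (\<Sum>a\<in>UNIV. E (\<lambda>q. q $ a * ((M *v q) $ a * h q)))"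
      by (rule E_sum) (auto intro!: polyfun.intros polyfun_mv ph)
    then show ?thesis
      by (subst E_diff) (auto intro!: polyfun_sum polyfun.intros polyfun_mv ph simp: E_cmult)
  qed
  also have "\<dots> = (\<Sum>a\<in>UNIV. E (\<lambda>q. (M *v q) $ a * Dh a q))"
    by (simp add: one sum.distrib trace_def sum_distrib_right)
  finally show ?thesis .
qed

lemma symswap: fixes B :: "real^'i^'i" shows "transpose B = B \<Longrightarrow> y \<bullet> (B *v w) = (B *v y) \<bullet> w"
proof -
  assume b: "transpose B = B"
  have "y \<bullet> (B *v w) = (y v* B) \<bullet> w" by (simp add: dot_lmul_matrix)
  also have "y v* B = transpose B *v y" by simp
  finally show ?thesis by (simp add: b)
qed

lemma inner_mv: fixes N :: "real^'i^'i" shows "(N *v q) \<bullet> w = q \<bullet> (transpose N *v w)"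
  using symswap[of "mat 1"] dot_lmul_matrix[of q "transpose N" w] by simp

lemma Cswap: "(C *v axis a 1) \<bullet> w = (C *v w) $ a"
  using symswap[OF Csym, of "axis a 1" w] by (simp add: inner_commute inner_axis')

lemma deriv_quad: fixes B :: "real^'i^'i" shows "((\<lambda>s. (y + s *\<^sub>R v) \<bullet> (B *v (y + s *\<^sub>R v)) - c) has_real_derivative (v \<bullet> (B *v y) + y \<bullet> (B *v v))) (at 0)"
proof -
  have e: "(y + s *\<^sub>R v) \<bullet> (B *v (y + s *\<^sub>R v)) - c = (y \<bullet> (B *v y) - c) + s * (v \<bullet> (B *v y) + y \<bullet> (B *v v)) + s * s * (v \<bullet> (B *v v))" for s
    by (simp add: matrix_vector_right_distrib matrix_vector_mult_scaleR inner_add_left inner_add_right algebra_simps)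
  show ?thesis unfolding e by (auto intro!: derivative_eq_intros)
qed

lemma deriv_quadC:
  assumes "transpose S = S"
  shows "((\<lambda>s. (y + s *\<^sub>R (C *v axis a 1)) \<bullet> (S *v (y + s *\<^sub>R (C *v axis a 1))) - c) has_real_derivative 2 * ((C ** S) *v y) $ a) (at 0)"
proof -
  have "(C *v axis a 1) \<bullet> (S *v y) + y \<bullet> (S *v (C *v axis a 1)) = 2 * ((C ** S) *v y) $ a"
    using symswap[OF assms, of y "C *v axis a 1"] Cswap[of a "S *v y"]
    by (simp add: inner_commute matrix_vector_mul_assoc)
  then show ?thesis using deriv_quad[of y "C *v axis a 1" S c] by simp
qed

lemma E0: "E (\<lambda>q. 0) = 0" unfolding E_def by simp

lemma EQ: "E (\<lambda>q. q \<bullet> (B *v q) - trace (B ** C)) = 0"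
proof -
  have "E (\<lambda>q. (q \<bullet> (B *v q) - trace (B ** C)) * 1) = (\<Sum>a\<in>UNIV. E (\<lambda>q. (B *v q) $ a * 0))"
    by (rule L[where Dh="\<lambda>a q. 0"]) (auto intro: polyfun.intros)
  then show ?thesis by (simp add: E0)
qed

lemma EYH:
  assumes S: "transpose S = S"
  shows "E (\<lambda>q. (q \<bullet> (N *v q) - trace (N ** C)) * (q \<bullet> (S *v q) - trace (S ** C)))
     = 2 * trace (transpose N ** (C ** S) ** C) * E (\<lambda>q. 1)"
proof -
  have "E (\<lambda>q. (q \<bullet> (N *v q) - trace (N ** C)) * (q \<bullet> (S *v q) - trace (S ** C)))
     = (\<Sum>a\<in>UNIV. E (\<lambda>q. (N *v q) $ a * (2 * ((C ** S) *v q) $ a)))"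
    by (rule L) (auto intro!: polyfun_diff polyfun_quad polyfun.intros polyfun_mv deriv_quadC S)
  also have "\<dots> = E (\<lambda>q. \<Sum>a\<in>UNIV. (N *v q) $ a * (2 * ((C ** S) *v q) $ a))"
    by (rule E_sum[symmetric]) (auto intro!: polyfun.intros polyfun_mv)
  also have "\<dots> = 2 * E (\<lambda>q. q \<bullet> ((transpose N ** (C ** S)) *v q))"
  proof -
    have "(\<Sum>a\<in>UNIV. (N *v q) $ a * (2 * ((C ** S) *v q) $ a)) = 2 * ((N *v q) \<bullet> ((C ** S) *v q))" for q
      by (simp add: inner_vec_def sum_distrib_left algebra_simps)
    then show ?thesis by (simp add: inner_mv matrix_vector_mul_assoc E_cmult)
  qed
  also have "E (\<lambda>q. q \<bullet> ((transpose N ** (C ** S)) *v q)) = trace (transpose N ** (C ** S) ** C) * E (\<lambda>q. 1)"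
    using EQ[of "transpose N ** (C ** S)"] E_diff[OF polyfun_quad pconst, of "transpose N ** (C ** S)" "trace (transpose N ** (C ** S) ** C)"]
      E_cmult[of "trace (transpose N ** (C ** S) ** C)" "\<lambda>q. 1"] by simp
  finally show ?thesis by simp
qed

lemma EQH:
  assumes S: "transpose S = S"
  shows "E (\<lambda>q. q \<bullet> (N *v q) * (q \<bullet> (S *v q) - trace (S ** C)))
     = 2 * trace (transpose N ** (C ** S) ** C) * E (\<lambda>q. 1)"
proof -
  have "E (\<lambda>q. q \<bullet> (N *v q) * (q \<bullet> (S *v q) - trace (S ** C))) =
     E (\<lambda>q. (q \<bullet> (N *v q) - trace (N ** C)) * (q \<bullet> (S *v q) - trace (S ** C)) + trace (N ** C) * (q \<bullet> (S *v q) - trace (S ** C)))"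
    by (simp add: algebra_simps)
  also have "\<dots> = E (\<lambda>q. (q \<bullet> (N *v q) - trace (N ** C)) * (q \<bullet> (S *v q) - trace (S ** C))) + trace (N ** C) * E (\<lambda>q. q \<bullet> (S *v q) - trace (S ** C))"
    by (subst E_add) (auto intro!: polyfun_diff polyfun_quad polyfun.intros simp: E_cmult)
  also have "\<dots> = 2 * trace (transpose N ** (C ** S) ** C) * E (\<lambda>q. 1)"
    by (simp add: EYH[OF S] EQ)
  finally show ?thesis .
qed

lemma per_i:
  assumes A: "transpose A = A" and M: "transpose M = M"
  shows "E (\<lambda>q. (q \<bullet> ((M ** C ** M) *v q) - c1 - 1/4 * (q \<bullet> (M *v q) - trace (M ** C))\<^sup>2) * (q \<bullet> (A *v q) - trace (A ** C))) = 0"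
proof -
  define X where "X = (\<lambda>q. q \<bullet> (A *v q) - trace (A ** C))"
  define Y where "Y = (\<lambda>q. q \<bullet> (M *v q) - trace (M ** C))"
  define Q where "Q = (\<lambda>q. q \<bullet> ((M ** C ** M) *v q))"
  have pX: "polyfun X" and pY: "polyfun Y" and pQ: "polyfun Q" unfolding X_def Y_def Q_def
    by (auto intro!: polyfun_diff polyfun_quad polyfun.intros)
  have "E (\<lambda>q. (Q q - c1 - 1/4 * (Y q)\<^sup>2) * X q) = E (\<lambda>q. Q q * X q - c1 * X q - 1/4 * (Y q * (Y q * X q)))"
    by (simp add: algebra_simps power2_eq_square)
  also have "\<dots> = E (\<lambda>q. Q q * X q) - c1 * E X - 1/4 * E (\<lambda>q. Y q * (Y q * X q))"
  proof -
    have p1: "polyfun (\<lambda>q. Q q * X q)" by (rule pmult[OF pQ pX])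
    have p2: "polyfun (\<lambda>q. c1 * X q)" by (rule pmult[OF pconst pX])
    have p3: "polyfun (\<lambda>q. 1/4 * (Y q * (Y q * X q)))" by (rule pmult[OF pconst pmult[OF pY pmult[OF pY pX]]])
    show ?thesis
      using E_diff[OF polyfun_diff[OF p1 p2] p3] E_diff[OF p1 p2]
        E_cmult[of c1 X] E_cmult[of "1/4" "\<lambda>q. Y q * (Y q * X q)"] by simp
  qed
  also have "E X = 0" unfolding X_def by (rule EQ)
  also have "E (\<lambda>q. Q q * X q) = 2 * trace (transpose (M ** C ** M) ** (C ** A) ** C) * E (\<lambda>q. 1)"
    unfolding Q_def X_def by (rule EQH[OF A])
  also have "E (\<lambda>q. Y q * (Y q * X q)) = 4 * trace (transpose (transpose M ** (C ** M)) ** (C ** A) ** C) * E (\<lambda>q. 1)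
      + 4 * trace (transpose (transpose M ** (C ** A)) ** (C ** M) ** C) * E (\<lambda>q. 1)"
  proof -
    have d: "((\<lambda>s. Y (y + s *\<^sub>R (C *v axis a 1)) * X (y + s *\<^sub>R (C *v axis a 1))) has_real_derivative
      (2 * ((C ** M) *v y) $ a * X y + Y y * (2 * ((C ** A) *v y) $ a))) (at 0)" for a y
    proof -
      have "((\<lambda>s. Y (y + s *\<^sub>R (C *v axis a 1)) * X (y + s *\<^sub>R (C *v axis a 1))) has_real_derivative
        (2 * ((C ** M) *v y) $ a * X (y + 0 *\<^sub>R (C *v axis a 1)) + (2 * ((C ** A) *v y) $ a) * Y (y + 0 *\<^sub>R (C *v axis a 1)))) (at 0)"
        unfolding X_def Y_def by (rule DERIV_mult[OF deriv_quadC[OF M] deriv_quadC[OF A]])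
      then show ?thesis by (simp add: mult.commute)
    qed
    have "E (\<lambda>q. Y q * (Y q * X q)) = E (\<lambda>q. (q \<bullet> (M *v q) - trace (M ** C)) * (Y q * X q))"
      by (simp add: Y_def)
    also have "\<dots> = (\<Sum>a\<in>UNIV. E (\<lambda>q. (M *v q) $ a * (2 * ((C ** M) *v q) $ a * X q + Y q * (2 * ((C ** A) *v q) $ a))))"
      by (rule L) (auto intro!: pmult pX pY polyfun.intros polyfun_mv d)
    also have "\<dots> = E (\<lambda>q. \<Sum>a\<in>UNIV. (M *v q) $ a * (2 * ((C ** M) *v q) $ a * X q + Y q * (2 * ((C ** A) *v q) $ a)))"
      by (rule E_sum[symmetric]) (auto intro!: pmult pX pY polyfun.intros polyfun_mv)
    also have "\<dots> = E (\<lambda>q. 2 * (q \<bullet> ((transpose M ** (C ** M)) *v q) * X q) + 2 * (q \<bullet> ((transpose M ** (C ** A)) *v q) * Y q))"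
    proof -
      have "(\<Sum>a\<in>UNIV. (M *v q) $ a * (2 * ((C ** M) *v q) $ a * X q + Y q * (2 * ((C ** A) *v q) $ a)))
         = 2 * (((M *v q) \<bullet> ((C ** M) *v q)) * X q) + 2 * (((M *v q) \<bullet> ((C ** A) *v q)) * Y q)" for q
        by (simp add: inner_vec_def sum_distrib_left sum_distrib_right sum.distrib algebra_simps)
      then show ?thesis by (simp add: inner_mv matrix_vector_mul_assoc)
    qed
    also have "\<dots> = 2 * E (\<lambda>q. q \<bullet> ((transpose M ** (C ** M)) *v q) * X q) + 2 * E (\<lambda>q. q \<bullet> ((transpose M ** (C ** A)) *v q) * Y q)"
      by (subst E_add) (auto intro!: pmult pX pY polyfun.intros polyfun_quad simp: E_cmult)
    also have "E (\<lambda>q. q \<bullet> ((transpose M ** (C ** M)) *v q) * X q) = 2 * trace (transpose (transpose M ** (C ** M)) ** (C ** A) ** C) * E (\<lambda>q. 1)"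
      unfolding X_def by (rule EQH[OF A])
    also have "E (\<lambda>q. q \<bullet> ((transpose M ** (C ** A)) *v q) * Y q) = 2 * trace (transpose (transpose M ** (C ** A)) ** (C ** M) ** C) * E (\<lambda>q. 1)"
      unfolding Y_def by (rule EQH[OF M])
    finally show ?thesis by simp
  qed
  also have "trace (transpose (transpose M ** (C ** A)) ** (C ** M) ** C) = trace (transpose (M ** C ** M) ** (C ** A) ** C)"
  proof -
    have "trace (transpose (transpose M ** (C ** A)) ** (C ** M) ** C) = trace ((A ** C) ** (M ** C ** M ** C))"
      by (simp add: matrix_transpose_mul A M Csym matrix_mul_assoc)
    also have "\<dots> = trace ((M ** C ** M ** C) ** (A ** C))" by (rule trace_mul_sym)
    also have "\<dots> = trace (transpose (M ** C ** M) ** (C ** A) ** C)"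
      by (simp add: matrix_transpose_mul A M Csym matrix_mul_assoc)
    finally show ?thesis .
  qed
  also have "trace (transpose (transpose M ** (C ** M)) ** (C ** A) ** C) = trace (transpose (M ** C ** M) ** (C ** A) ** C)"
    by (simp add: M matrix_mul_assoc)
  finally show ?thesis unfolding X_def Y_def Q_def by simp
qed

end



lemma bl_transpose: "bounded_linear (transpose :: real^'n::finite^'m::finite \<Rightarrow> real^'m^'n)"
proof -
  have "linear (transpose :: real^'n::finite^'m::finite \<Rightarrow> real^'m^'n)"
    by (rule linearI) (simp_all add: transpose_def vec_eq_iff)
  then show ?thesis by (simp add: linear_conv_bounded_linear)
qed

lemma partialC_sym:
  fixes C :: "real ^ 'd \<Rightarrow> ('n::finite, 'd::finite) mat"
  assumes "open \<Omega>" "smooth_on \<Omega> C" "\<forall>x\<in>\<Omega>. C x \<in> Zset" "x \<in> \<Omega>"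
  shows "transpose (partialC C i x) = partialC C i x"
proof -
  have "Ck_on (Suc 0) C \<Omega>" using assms(2) unfolding smooth_on_def by blast
  then obtain g' where d: "\<And>y. y \<in> \<Omega> \<Longrightarrow> (C has_derivative g' y) (at y)" by auto
  define e :: "real^'d" where "e = axis i 1"
  have hl: "((\<lambda>t::real. x + t *\<^sub>R e) has_derivative (\<lambda>t. t *\<^sub>R e)) (at 0)"
    by (auto intro!: derivative_eq_intros)
  have "((\<lambda>t. C (x + t *\<^sub>R e)) has_derivative (\<lambda>t. g' x (t *\<^sub>R e))) (at 0)"
    using has_derivative_compose[OF hl, of C "g' x"] d[OF assms(4)] by simp
  moreover have "g' x (t *\<^sub>R e) = t *\<^sub>R g' x e" for t
    using has_derivative_bounded_linear[OF d[OF assms(4)]] by (simp add: linear_simps)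
  ultimately have dl: "((\<lambda>t. C (x + t *\<^sub>R e)) has_vector_derivative g' x e) (at 0)"
    unfolding has_vector_derivative_def by simp
  then have pc: "partialC C i x = g' x e"
    unfolding partialC_def e_def by (rule vector_derivative_at)
  define S where "S = (\<lambda>t::real. x + t *\<^sub>R e) -` \<Omega>"
  have oS: "open S" unfolding S_def
    by (rule continuous_open_vimage[OF assms(1)]) (auto intro!: continuous_intros)
  have S0: "0 \<in> S" unfolding S_def using assms(4) by simp
  have symS: "transpose (C (x + t *\<^sub>R e)) = C (x + t *\<^sub>R e)" if "t \<in> S" for t
    using that assms(3) unfolding S_def Zset_def sym_mat_def by auto
  have "((\<lambda>t. transpose (C (x + t *\<^sub>R e))) has_vector_derivative transpose (g' x e)) (at 0)"
    by (rule bounded_linear.has_vector_derivative[OF bl_transpose dl])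
  then have "((\<lambda>t. C (x + t *\<^sub>R e)) has_vector_derivative transpose (g' x e)) (at 0)"
    by (rule has_vector_derivative_transform_within_open[OF _ oS S0]) (simp add: symS)
  then have "g' x e = transpose (g' x e)" by (rule vector_derivative_unique_at[OF dl])
  then show ?thesis unfolding pc by simp
qed


lemma pd_facts:
  fixes Cx :: "real^'i::finite^'i"
  assumes sym: "transpose Cx = Cx" and pd: "\<And>q. q \<noteq> 0 \<Longrightarrow> q \<bullet> (Cx *v q) > 0"
  shows "matrix_inv Cx ** Cx = mat 1" "Cx ** matrix_inv Cx = mat 1" "transpose (matrix_inv Cx) = matrix_inv Cx"
    "\<exists>\<mu>>0. \<forall>q. \<mu> * (norm q)\<^sup>2 \<le> q \<bullet> (matrix_inv Cx *v q)"
proof -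
  define K where "K = matrix_inv Cx"
  have "\<forall>x. Cx *v x = 0 \<longrightarrow> x = 0" using pd by (metis inner_zero_right less_irrefl)
  then have "invertible Cx" unfolding invertible_left_inverse matrix_left_invertible_ker .
  then have inv: "Cx ** K = mat 1 \<and> K ** Cx = mat 1" unfolding K_def matrix_inv_def invertible_def
    by (rule someI_ex)
  then show "matrix_inv Cx ** Cx = mat 1" "Cx ** matrix_inv Cx = mat 1" unfolding K_def by auto
  have "transpose K ** Cx = mat 1"
    using inv sym by (metis matrix_transpose_mul transpose_mat)
  then have tK: "transpose K = K"
    using inv by (metis matrix_mul_assoc matrix_mul_lid matrix_mul_rid)
  then show "transpose (matrix_inv Cx) = matrix_inv Cx" unfolding K_def .
  have Kpos: "q \<bullet> (K *v q) > 0" if "q \<noteq> 0" for q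
  proof -
    define w where "w = K *v q"
    have cw: "Cx *v w = q" unfolding w_def using inv by (simp add: matrix_vector_mul_assoc)
    then have "w \<noteq> 0" using that by auto
    then have "w \<bullet> (Cx *v w) > 0" by (rule pd)
    then show ?thesis using cw unfolding w_def by (simp add: inner_commute)
  qed
  define f where "f = (\<lambda>q::real^'i. q \<bullet> (K *v q))"
  have cf: "continuous_on (sphere 0 1) f" unfolding f_def
    by (rule continuous_on_subset[OF polyfun_continuous[OF polyfun_quad]]) simp
  have ne: "sphere (0::real^'i) 1 \<noteq> {}" by simp
  obtain u where u: "u \<in> sphere 0 1" and umin: "\<And>y. y \<in> sphere 0 1 \<Longrightarrow> f u \<le> f y"
    using continuous_attains_inf[OF compact_sphere ne cf] by blast
  have mu: "f u > 0" unfolding f_def using u by (intro Kpos) auto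
  have "\<mu> * (norm q)\<^sup>2 \<le> q \<bullet> (K *v q)" if "\<mu> = f u" for \<mu> q
  proof (cases "q = 0")
    case True then show ?thesis by simp
  next
    case False
    define y where "y = (1 / norm q) *\<^sub>R q"
    have y: "y \<in> sphere 0 1" unfolding y_def using False by simp
    have qy: "q = norm q *\<^sub>R y" unfolding y_def using False by simp
    have "f q = (norm q)\<^sup>2 * f y" unfolding f_def
      by (subst (1 2) qy) (simp add: matrix_vector_mult_scaleR power2_eq_square)
    then show ?thesis using umin[OF y] that unfolding f_def
      by (metis mult.commute mult_right_mono zero_le_power2)
  qed
  then show "\<exists>\<mu>>0. \<forall>q. \<mu> * (norm q)\<^sup>2 \<le> q \<bullet> (matrix_inv Cx *v q)"
    using mu unfolding K_def by blast
qed



theorem proposition2: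
  fixes \<Omega> :: "(real ^ 'd) set"
    and C :: "real ^ 'd \<Rightarrow> ('n::finite, 'd::finite) mat"
  assumes "open \<Omega>"
    and "smooth_on \<Omega> C"
    and "\<forall>x\<in>\<Omega>. C x \<in> Zset"
  shows "\<forall>x\<in>\<Omega>. \<forall>\<phi>\<in>tangent_space C.
           ((\<lambda>q. rho C x q * \<phi> x q) has_integral 0) UNIV"
proof (intro ballI)
  fix x \<phi> assume x: "x \<in> \<Omega>" and ph: "\<phi> \<in> tangent_space C"
  have "\<exists>A. (\<forall>x. block_diag (A x) \<and> sym_mat (A x)) \<and>
      \<phi> = (\<lambda>x q. (q \<bullet> (A x *v q) - trace (A x ** C x)) * gaussian C x q)"
    using ph unfolding tangent_space_def by simp
  then obtain A where As0: "\<forall>x. block_diag (A x) \<and> sym_mat (A x)"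
    and phd: "\<phi> = (\<lambda>x q. (q \<bullet> (A x *v q) - trace (A x ** C x)) * gaussian C x q)"
    by (elim exE conjE)
  have As: "\<And>y. sym_mat (A y)" using As0 by blast
  define Cx where "Cx = C x"
  have Z: "Cx \<in> Zset" using assms(3) x unfolding Cx_def by blast
  have sym: "transpose Cx = Cx" using Z unfolding Zset_def sym_mat_def by blast
  have pd: "\<And>q. q \<noteq> 0 \<Longrightarrow> q \<bullet> (Cx *v q) > 0" using Z unfolding Zset_def pos_def_def by blast
  define K where "K = matrix_inv Cx"
  note pf = pd_facts[OF sym pd, folded K_def]
  obtain \<mu> where mu: "\<mu> > 0" "\<And>q. \<mu> * (norm q)\<^sup>2 \<le> q \<bullet> (K *v q)" using pf(4) by blast
  interpret G: gset2 K \<mu> Cx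
    by unfold_locales (use pf mu sym in auto)
  define Ax where "Ax = A x"
  have Asym: "transpose Ax = Ax" using As unfolding Ax_def sym_mat_def by blast
  define Cp where "Cp = (\<lambda>i. partialC C i x)"
  have Cpsym: "transpose (Cp i) = Cp i" for i unfolding Cp_def by (rule partialC_sym[OF assms x])
  define M where "M = (\<lambda>i. K ** Cp i ** K)"
  have Msym: "transpose (M i) = M i" for i
    unfolding M_def by (simp add: matrix_transpose_mul Cpsym pf(3) matrix_mul_assoc)
  define P where "P = (\<lambda>i. K ** Cp i)"
  have PPK: "P i ** P i ** K = M i ** Cx ** M i" for i
  proof -
    have "M i ** Cx ** M i = K ** Cp i ** (K ** Cx) ** K ** Cp i ** K"
      unfolding M_def by (simp add: matrix_mul_assoc)
    also have "\<dots> = P i ** P i ** K" unfolding P_def using pf(1) by (simp add: matrix_mul_assoc)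
    finally show ?thesis by simp
  qed
  have PK: "P i ** K = M i" for i unfolding P_def M_def by (simp add: matrix_mul_assoc)
  have trP: "trace (P i) = trace (M i ** Cx)" for i
  proof -
    have "M i ** Cx = K ** Cp i ** (K ** Cx)" unfolding M_def by (simp add: matrix_mul_assoc)
    then show ?thesis unfolding P_def using pf(1) by simp
  qed
  define r where "r = (\<lambda>i q. q \<bullet> ((M i ** Cx ** M i) *v q) - (1/2) * trace (P i ** P i)
      - 1/4 * (q \<bullet> (M i *v q) - trace (M i ** Cx))\<^sup>2)"
  define X where "X = (\<lambda>q. q \<bullet> (Ax *v q) - trace (Ax ** Cx))"
  have rho_eq: "rho C x q = (\<Sum>i\<in>UNIV. r i q)" for q
  proof -
    have "rho C x q = (\<Sum>i\<in>UNIV. q \<bullet> ((P i ** P i ** K) *v q)) - (1/2) * (\<Sum>i\<in>UNIV. trace (P i ** P i))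
       - (1/4) * (\<Sum>i\<in>UNIV. (q \<bullet> ((P i ** K) *v q) - trace (P i))\<^sup>2)"
      unfolding rho_def Let_def P_def K_def Cx_def Cp_def by simp
    also have "\<dots> = (\<Sum>i\<in>UNIV. r i q)"
      unfolding r_def PPK PK trP by (simp add: sum_subtractf sum_distrib_left)
    finally show ?thesis .
  qed
  define Zc where "Zc = sqrt ((2 * pi) ^ CARD('n \<times> 'd) * det Cx)"
  have gau: "gaussian C x q = G.g q / Zc" for q
    unfolding gaussian_def G.g_def Zc_def by (simp add: Cx_def K_def)
  define R where "R = (\<lambda>q. (\<Sum>i\<in>UNIV. r i q) * X q)"
  have pr: "polyfun (r i)" for i unfolding r_def
    by (rule polyfun_diff[OF polyfun_diff[OF polyfun_quad pconst] pmult[OF pconst polyfun_power[OF polyfun_diff[OF polyfun_quad pconst]]]])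
  have pX: "polyfun X" unfolding X_def by (auto intro!: polyfun_diff polyfun_quad polyfun.intros)
  have pR: "polyfun R" unfolding R_def by (intro pmult polyfun_sum pr pX) auto
  have ER: "G.E R = 0"
  proof -
    have "G.E R = G.E (\<lambda>q. \<Sum>i\<in>UNIV. r i q * X q)" unfolding R_def by (simp add: sum_distrib_right)
    also have "\<dots> = (\<Sum>i\<in>UNIV. G.E (\<lambda>q. r i q * X q))"
      by (rule G.E_sum) (auto intro!: pmult pr pX)
    also have "\<dots> = 0"
    proof (rule sum.neutral, intro ballI)
      fix i
      show "G.E (\<lambda>q. r i q * X q) = 0"
        unfolding r_def X_def by (rule G.per_i[OF Asym Msym])
    qed
    finally show ?thesis .
  qed
  have "((\<lambda>q. R q * G.g q) has_integral integral\<^sup>L lborel (\<lambda>q. R q * G.g q)) UNIV"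
    by (rule has_integral_integral_lborel[OF G.integrable_pg[OF pR]])
  then have "((\<lambda>q. R q * G.g q) has_integral 0) UNIV" using ER unfolding G.E_def by simp
  then have "((\<lambda>q. (1 / Zc) * (R q * G.g q)) has_integral (1 / Zc) * 0) UNIV"
    by (rule has_integral_mult_right)
  moreover have "(\<lambda>q. rho C x q * \<phi> x q) = (\<lambda>q. (1 / Zc) * (R q * G.g q))"
  proof (rule ext)
    fix q
    have ph_eq: "\<phi> x q = X q * (G.g q / Zc)"
      unfolding phd X_def Ax_def Cx_def gau[symmetric] by simp
    show "rho C x q * \<phi> x q = (1 / Zc) * (R q * G.g q)"
      unfolding ph_eq rho_eq R_def by simp
  qed
  ultimately show "((\<lambda>q. rho C x q * \<phi> x q) has_integral 0) UNIV" by simp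
qed

end
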